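(* Let $\Gamma$ be a weighted digraph with vertex set $\{1,\dots,n\}$, $n>1$, without loops and with strictly positive arc weights, with Laplacian matrix $L$ and matrices of in-forests $Q_k$. Then each $Q_k$, $k=0,1,\dots$, commutes with every matrix that commutes with $L$; in particular the matrices $Q_k$ commute with $L$, with $Q(\tau)=\sum_{k\ge0}Q_k\tau^k$ for every $\tau$, and with each other.
   Context: $W=(w_{ij})$ is the matrix of arc weights ($w_{ij}>0$ iff there is an arc $i\to j$, else $0$). The Laplacian $L=(\ell_{ij})$: $\ell_{ij}=-w_{ij}$ for $j\ne i$, $\ell_{ii}=\sum_{k\ne i}w_{ik}$. The weight of a subgraph is the product of its arc weights (1 if no arcs); the weight of a set of subgraphs is the sum of their weights (0 for the empty set). A converging tree is a weakly connected digraph with one vertex (the root) of outdegree 0 and all others of outdegree 1; an in-forest is a spanning subgraph of $\Gamma$ whose weak components are converging trees. $Q_k=(q^k_{ij})$ where $q^k_{ij}$ is the total weight of in-forests with $k$ arcs in which $i$ lies in a tree rooted at $j$ (so $Q_k=0$ for large $k$ and the sum defining $Q(\tau)$ is finite). *)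

theory Defs
  imports "HOL-Analysis.Analysis"
begin

text \<open>Vertices are the elements of a finite type 'n (standing for {1..n}).
  W $ i $ j is the weight of the arc i -> j (an arc exists iff W $ i $ j > 0).
  A spanning subgraph is represented by its set of arcs.\<close>

definition arcs :: "real^'n^'n \<Rightarrow> ('n \<times> 'n) set" where
  "arcs W = {(i,j). W $ i $ j > 0}"

definition laplacian :: "real^'n^'n \<Rightarrow> real^'n^'n" where
  "laplacian W = (\<chi> i j. if i = j then (\<Sum>k\<in>UNIV - {i}. W $ i $ k) else - W $ i $ j)"

definition sg_weight :: "real^'n^'n \<Rightarrow> ('n \<times> 'n) set \<Rightarrow> real" where
  "sg_weight W F = (\<Prod>(i,j)\<in>F. W $ i $ j)"

definition outdeg :: "('n \<times> 'n) set \<Rightarrow> 'n \<Rightarrow> nat" where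
  "outdeg F i = card {j. (i,j) \<in> F}"

definition weakly_conn :: "('n \<times> 'n) set \<Rightarrow> 'n \<Rightarrow> 'n \<Rightarrow> bool" where
  "weakly_conn F i j \<longleftrightarrow> (i,j) \<in> (F \<union> F\<inverse>)\<^sup>*"

definition weak_component :: "('n \<times> 'n) set \<Rightarrow> 'n \<Rightarrow> 'n set" where
  "weak_component F i = {j. weakly_conn F i j}"

text \<open>A weak component C (with the arcs of F inside it) is a converging tree:
  exactly one vertex (the root) of outdegree 0, all others of outdegree 1.
  Weak connectedness holds by construction of the component.\<close>
definition converging_tree_comp :: "('n \<times> 'n) set \<Rightarrow> 'n set \<Rightarrow> bool" where
  "converging_tree_comp F C \<longleftrightarrow>
     (\<exists>!r. r \<in> C \<and> outdeg F r = 0) \<and> (\<forall>v\<in>C. outdeg F v = 0 \<or> outdeg F v = 1)"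

definition in_forest :: "real^'n^'n \<Rightarrow> ('n \<times> 'n) set \<Rightarrow> bool" where
  "in_forest W F \<longleftrightarrow> F \<subseteq> arcs W \<and>
     (\<forall>i. converging_tree_comp F (weak_component F i))"

definition in_tree_rooted_at :: "('n \<times> 'n) set \<Rightarrow> 'n \<Rightarrow> 'n \<Rightarrow> bool" where
  "in_tree_rooted_at F i j \<longleftrightarrow> j \<in> weak_component F i \<and> outdeg F j = 0"

definition Qmat :: "real^'n^'n \<Rightarrow> nat \<Rightarrow> real^'n^'n" where
  "Qmat W k = (\<chi> i j. sum (sg_weight W)
      {F. in_forest W F \<and> card F = k \<and> in_tree_rooted_at F i j})"

text \<open>Q(tau) = sum_{k>=0} Q_k tau^k (a finite sum, since Q_k = 0 for large k).\<close>
definition Qtau :: "real^'n^'n \<Rightarrow> real \<Rightarrow> real^'n^'n" where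
  "Qtau W \<tau> = (\<Sum>k. (\<tau> ^ k) *\<^sub>R Qmat W k)"

end

theory Submission
  imports Defs
begin


definition func :: "('n \<times> 'n) set \<Rightarrow> bool" where
  "func F \<longleftrightarrow> (\<forall>x y z. (x,y)\<in>F \<longrightarrow> (x,z)\<in>F \<longrightarrow> y = z)"

definition forest :: "real^'n^'n \<Rightarrow> ('n \<times> 'n) set \<Rightarrow> bool" where
  "forest W F \<longleftrightarrow> F \<subseteq> arcs W \<and> func F \<and> acyclic F"

definition froot :: "('n \<times> 'n) set \<Rightarrow> 'n \<Rightarrow> 'n" where
  "froot F x = (THE r. (x,r)\<in>F\<^sup>* \<and> r \<notin> Domain F)"

lemma root_ex:
  fixes F :: "('n::finite \<times> 'n) set"
  assumes "acyclic F" shows "\<exists>r. (x,r)\<in>F\<^sup>* \<and> r \<notin> Domain F"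
proof -
  have "wf (F\<inverse>)" by (rule finite_acyclic_wf_converse) (auto simp: assms)
  then show ?thesis
  proof (induction x rule: wf_induct_rule)
    case (less x)
    show ?case
    proof (cases "x \<in> Domain F")
      case True
      then obtain y where y: "(x,y)\<in>F" by auto
      with less obtain r where "(y,r)\<in>F\<^sup>*" "r \<notin> Domain F" by auto
      then show ?thesis using y by (meson converse_rtrancl_into_rtrancl)
    next
      case False then show ?thesis by auto
    qed
  qed
qed

lemma root_uniq:
  assumes "func F" "(x,a)\<in>F\<^sup>*" "a\<notin>Domain F" "(x,b)\<in>F\<^sup>*" "b\<notin>Domain F"
  shows "a = b"
  using assms(2,4,5)
proof (induction x arbitrary: b rule: converse_rtrancl_induct)
  case base
  then show ?case using assms(3) by (auto elim: converse_rtranclE)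
next
  case (step x y)
  from step.prems have "x \<noteq> b" using step.hyps(1) by auto
  with step.prems obtain y' where "(x,y')\<in>F" "(y',b)\<in>F\<^sup>*" by (auto elim: converse_rtranclE)
  moreover have "y' = y" using assms(1) step.hyps(1) calculation(1) unfolding func_def by blast
  ultimately show ?case using step.IH step.prems by auto
qed

lemma root_prop:
  fixes F :: "('n::finite \<times> 'n) set"
  assumes "func F" "acyclic F"
  shows "(x, froot F x)\<in>F\<^sup>* \<and> froot F x \<notin> Domain F"
proof -
  obtain r where r: "(x,r)\<in>F\<^sup>*" "r \<notin> Domain F" using root_ex[OF assms(2)] by blast
  have "froot F x = r" unfolding froot_def
    by (rule the_equality) (use r root_uniq[OF assms(1)] in auto)
  then show ?thesis using r by simp
qed

lemma root_eqI:
  fixes F :: "('n::finite \<times> 'n) set"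
  assumes "func F" "acyclic F" "(x,r)\<in>F\<^sup>*" "r \<notin> Domain F"
  shows "froot F x = r"
proof -
  have "(x, froot F x)\<in>F\<^sup>*" "froot F x \<notin> Domain F" using root_prop[OF assms(1,2)] by auto
  then show ?thesis using root_uniq[OF assms(1) _ _ assms(3,4)] by blast
qed

lemma root_rtrancl:
  fixes F :: "('n::finite \<times> 'n) set"
  assumes "func F" "acyclic F" "(x,y)\<in>F\<^sup>*"
  shows "froot F x = froot F y"
  using root_prop[OF assms(1,2), of y] assms(3)
  by (intro root_eqI[OF assms(1,2)]) auto

lemma root_step:
  fixes F :: "('n::finite \<times> 'n) set"
  assumes "func F" "acyclic F" "(x,y)\<in>F"
  shows "froot F x = froot F y"
  using root_rtrancl[OF assms(1,2)] assms(3) by blast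

lemma root_weak:
  fixes F :: "('n::finite \<times> 'n) set"
  assumes "func F" "acyclic F" "(x,y)\<in>(F \<union> F\<inverse>)\<^sup>*"
  shows "froot F x = froot F y"
  using assms(3)
proof (induction rule: rtrancl_induct)
  case (step y z)
  then show ?case using root_step[OF assms(1,2), of y z] root_step[OF assms(1,2), of z y] by auto
qed simp

lemma root_sink:
  fixes F :: "('n::finite \<times> 'n) set"
  assumes "func F" "acyclic F" "x \<notin> Domain F"
  shows "froot F x = x"
  using root_eqI[OF assms(1,2)] assms(3) by auto

lemma root_change:
  fixes F :: "('n::finite \<times> 'n) set"
  assumes "func F" "acyclic F" "func F'" "acyclic F'"
    and same: "\<And>y z. (x,y)\<in>F\<^sup>* \<Longrightarrow> (y,z)\<in>F \<longleftrightarrow> (y,z)\<in>F'"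
  shows "froot F' x = froot F x"
proof -
  have reach: "(x,y)\<in>F'\<^sup>*" if "(x,y)\<in>F\<^sup>*" for y
    using that
  proof (induction rule: rtrancl_induct)
    case (step y z)
    then show ?case using same[of y z] by (meson rtrancl.rtrancl_into_rtrancl)
  qed simp
  have r: "(x, froot F x)\<in>F\<^sup>*" "froot F x \<notin> Domain F" using root_prop[OF assms(1,2)] by auto
  have "froot F x \<notin> Domain F'" using r same[OF r(1)] by auto
  then show ?thesis using root_eqI[OF assms(3,4) reach[OF r(1)]] by simp
qed

lemma outdeg0:
  fixes F :: "('n::finite \<times> 'n) set"
  shows "outdeg F x = 0 \<longleftrightarrow> x \<notin> Domain F"
  unfolding outdeg_def by auto

lemma outdeg_le1:
  fixes F :: "('n::finite \<times> 'n) set"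
  assumes "func F" shows "outdeg F x \<le> 1"
proof -
  have "{y. (x,y)\<in>F} \<subseteq> {SOME y. (x,y)\<in>F}" using assms unfolding func_def
    by (auto intro: someI2)
  then show ?thesis unfolding outdeg_def
    by (metis card.empty card.insert card_mono empty_iff finite.intros(1) finite_insert One_nat_def)
qed

lemma cycle_spread:
  assumes "func F" "(x,x)\<in>F\<^sup>+" "(x,y)\<in>F\<^sup>*"
  shows "(y,y)\<in>F\<^sup>+"
  using assms(3)
proof (induction rule: rtrancl_induct)
  case base then show ?case using assms(2) by simp
next
  case (step y z)
  obtain y' where "(y,y')\<in>F" "(y',y)\<in>F\<^sup>*" using step.IH by (auto dest: tranclD)
  then have "y' = z" using assms(1) step.hyps(2) unfolding func_def by blast
  then show ?case using \<open>(y',y)\<in>F\<^sup>*\<close> step.hyps(2)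
    by (meson rtrancl_into_trancl1)
qed

lemma in_forest_iff:
  fixes W :: "real^'n^'n"
  shows "in_forest W F \<longleftrightarrow> forest W F"
proof
  assume H: "in_forest W F"
  have sub: "F \<subseteq> arcs W" using H unfolding in_forest_def by auto
  have od: "outdeg F v \<le> 1" for v
  proof -
    have "v \<in> weak_component F v" unfolding weak_component_def weakly_conn_def by auto
    then show ?thesis using H unfolding in_forest_def converging_tree_comp_def by fastforce
  qed
  have fn: "func F" unfolding func_def
  proof (intro allI impI)
    fix x y z assume "(x,y)\<in>F" "(x,z)\<in>F"
    show "y = z"
    proof (rule ccontr)
      assume "y \<noteq> z"
      then have "card {y,z} \<le> card {w. (x,w)\<in>F}"
        using \<open>(x,y)\<in>F\<close> \<open>(x,z)\<in>F\<close> by (intro card_mono) auto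
      then show False using od[of x] \<open>y \<noteq> z\<close> unfolding outdeg_def by simp
    qed
  qed
  have reach: "\<exists>r. (x,r)\<in>F\<^sup>* \<and> r \<notin> Domain F" for x
  proof -
    obtain r where r: "r \<in> weak_component F x" "outdeg F r = 0"
      using H unfolding in_forest_def converging_tree_comp_def by blast
    have rx: "(r,x)\<in>(F \<union> F\<inverse>)\<^sup>*" using r(1) unfolding weak_component_def weakly_conn_def
      by (metis converse_Un converse_converse rtrancl_converseI sup_commute mem_Collect_eq)
    have "(v,r)\<in>F\<^sup>*" if "(r,v)\<in>(F \<union> F\<inverse>)\<^sup>*" for v
      using that
    proof (induction rule: rtrancl_induct)
      case (step u v)
      show ?case
      proof (cases "(v,u)\<in>F")
        case True then show ?thesis using step.IH by (meson converse_rtrancl_into_rtrancl)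
      next
        case False
        then have uv: "(u,v)\<in>F" using step.hyps(2) by auto
        have "u \<noteq> r" using uv r(2) outdeg0 by blast
        then obtain u' where "(u,u')\<in>F" "(u',r)\<in>F\<^sup>*" using step.IH by (auto elim: converse_rtranclE)
        then show ?thesis using fn uv unfolding func_def by blast
      qed
    qed simp
    then show ?thesis using rx r(2) outdeg0 by blast
  qed
  have "acyclic F" unfolding acyclic_def
  proof (intro allI notI)
    fix x assume "(x,x)\<in>F\<^sup>+"
    obtain r where "(x,r)\<in>F\<^sup>*" "r \<notin> Domain F" using reach by blast
    then show False using cycle_spread[OF fn \<open>(x,x)\<in>F\<^sup>+\<close>] by (auto dest: tranclD)
  qed
  then show "forest W F" using sub fn unfolding forest_def by auto
next
  assume H: "forest W F"
  then have fn: "func F" and ac: "acyclic F" and sub: "F \<subseteq> arcs W" unfolding forest_def by auto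
  have "converging_tree_comp F (weak_component F i)" for i
    unfolding converging_tree_comp_def
  proof (intro conjI ballI)
    show "\<exists>!r. r \<in> weak_component F i \<and> outdeg F r = 0"
    proof (rule ex1I[where a="froot F i"])
      have "(i, froot F i)\<in>F\<^sup>*" "froot F i \<notin> Domain F" using root_prop[OF fn ac] by auto
      then show "froot F i \<in> weak_component F i \<and> outdeg F (froot F i) = 0"
        unfolding weak_component_def weakly_conn_def outdeg0
        by (auto intro: rtrancl_mono[THEN subsetD])
    next
      fix r assume "r \<in> weak_component F i \<and> outdeg F r = 0"
      then show "r = froot F i" using root_weak[OF fn ac, of i r] root_sink[OF fn ac, of r]
        unfolding weak_component_def weakly_conn_def outdeg0 by auto
    qed
  next
    fix v show "outdeg F v = 0 \<or> outdeg F v = 1" using outdeg_le1[OF fn, of v] by auto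
  qed
  then show "in_forest W F" using sub unfolding in_forest_def by auto
qed

lemma in_tree_iff:
  fixes F :: "('n::finite \<times> 'n) set"
  assumes "func F" "acyclic F"
  shows "in_tree_rooted_at F i j \<longleftrightarrow> froot F i = j"
proof
  assume "in_tree_rooted_at F i j"
  then show "froot F i = j" using root_weak[OF assms, of i j] root_sink[OF assms, of j]
    unfolding in_tree_rooted_at_def weak_component_def weakly_conn_def outdeg0 by auto
next
  assume "froot F i = j"
  then show "in_tree_rooted_at F i j" using root_prop[OF assms, of i]
    unfolding in_tree_rooted_at_def weak_component_def weakly_conn_def outdeg0
    by (auto intro: rtrancl_mono[THEN subsetD])
qed


definition FS :: "real^'n^'n \<Rightarrow> nat \<Rightarrow> ('n \<times> 'n) set set" where
  "FS W k = {F. forest W F \<and> card F = k}"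

definition sigma :: "real^'n^'n \<Rightarrow> nat \<Rightarrow> real" where
  "sigma W k = (\<Sum>F\<in>FS W k. sg_weight W F)"

definition succ :: "('n \<times> 'n) set \<Rightarrow> 'n \<Rightarrow> 'n" where
  "succ F i = (THE p. (i,p)\<in>F)"

lemma finite_FS: "finite (FS (W::real^'n::finite^'n) k)"
  by (rule finite_subset[of _ "Pow UNIV"]) auto

lemma succ_eq: "func F \<Longrightarrow> (i,p)\<in>F \<Longrightarrow> succ F i = p"
  unfolding succ_def func_def by blast

lemma wt_insert:
  fixes F :: "('n::finite \<times> 'n) set"
  assumes "(a,b) \<notin> F"
  shows "sg_weight W (insert (a,b) F) = W$a$b * sg_weight W F"
  unfolding sg_weight_def using assms by (simp add: prod.insert)

lemma Qmat_entry:
  fixes W :: "real^'n::finite^'n"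
  shows "Qmat W k $ i $ j = (\<Sum>F\<in>FS W k. sg_weight W F * of_bool (froot F i = j))"
proof -
  have "{F. in_forest W F \<and> card F = k \<and> in_tree_rooted_at F i j} = {F\<in>FS W k. froot F i = j}"
    unfolding FS_def in_forest_iff using in_tree_iff unfolding forest_def by blast
  then show ?thesis unfolding Qmat_def
    by (simp add: sum.inter_filter[OF finite_FS, symmetric] of_bool_def if_distrib cong: if_cong)
qed

lemma forest_func: "forest W F \<Longrightarrow> func F" and forest_acyc: "forest W F \<Longrightarrow> acyclic F"
  unfolding forest_def by auto

lemma C_invol:
  fixes W :: "real^'n::finite^'n" and F :: "('n \<times> 'n) set"
  assumes fo: "forest W F" and ip: "(i,p)\<in>F" and wm: "W$i$m > 0" and ne: "froot F m \<noteq> froot F i"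
  defines "F' \<equiv> insert (i,m) (F - {(i,p)})"
  shows "forest W F'" "card F' = card F" "(i,m)\<in>F'" "froot F' p \<noteq> froot F' i"
    "froot F' i = froot F m" "froot F' p = froot F i" "succ F' i = m" "succ F i = p"
    "sg_weight W F' * W$i$p = sg_weight W F * W$i$m" "insert (i,p) (F' - {(i,m)}) = F"
    "W$i$p > 0"
proof -
  have fn: "func F" and ac: "acyclic F" and sub: "F \<subseteq> arcs W" using fo unfolding forest_def by auto
  have rp: "froot F p = froot F i" using root_step[OF fn ac ip] by simp
  then have mp: "m \<noteq> p" using ne by auto
  have imF: "(i,m) \<notin> F" using fn ip mp unfolding func_def by blast
  define H where "H = F - {(i,p)}"
  have acH: "acyclic H" unfolding H_def by (rule acyclic_subset[OF ac]) auto
  have miH: "(m,i) \<notin> H\<^sup>*"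
  proof
    assume "(m,i)\<in>H\<^sup>*"
    then have "(m,i)\<in>F\<^sup>*" using rtrancl_mono[of H F] unfolding H_def by auto
    then show False using root_rtrancl[OF fn ac] ne by auto
  qed
  have acF': "acyclic F'" unfolding F'_def H_def[symmetric] using acH miH by simp
  have ipu: "\<And>z. (i,z)\<in>F \<Longrightarrow> z = p" using fn ip unfolding func_def by blast
  have fnF': "func F'" using fn ipu unfolding F'_def func_def by auto
  have subF': "F' \<subseteq> arcs W" using sub wm unfolding F'_def arcs_def by auto
  show fo': "forest W F'" using acF' fnF' subF' unfolding forest_def by auto
  have fin: "finite F" by simp
  have c1: "Suc (card (F - {(i,p)})) = card F" using card_Suc_Diff1[OF fin ip] .
  have c2: "card F' = Suc (card (F - {(i,p)}))" unfolding F'_def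
    by (rule card_insert_disjoint) (use imF in auto)
  show "card F' = card F" using c1 c2 by simp
  show im: "(i,m)\<in>F'" unfolding F'_def by simp
  have r1: "froot F' m = froot F m"
  proof (rule root_change[OF fn ac fnF' acF'])
    fix y z assume "(m,y)\<in>F\<^sup>*"
    then have "y \<noteq> i" using root_rtrancl[OF fn ac] ne by auto
    then show "(y,z)\<in>F \<longleftrightarrow> (y,z)\<in>F'" unfolding F'_def by auto
  qed
  show r2: "froot F' i = froot F m" using root_step[OF fnF' acF' im] r1 by simp
  have r3: "froot F' p = froot F p"
  proof (rule root_change[OF fn ac fnF' acF'])
    fix y z assume py: "(p,y)\<in>F\<^sup>*"
    have "y \<noteq> i"
    proof
      assume "y = i"
      then have "(i,i)\<in>F\<^sup>+" using ip py by (meson rtrancl_into_trancl2)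
      then show False using ac unfolding acyclic_def by blast
    qed
    then show "(y,z)\<in>F \<longleftrightarrow> (y,z)\<in>F'" unfolding F'_def by auto
  qed
  show "froot F' p = froot F i" using r3 rp by simp
  then show "froot F' p \<noteq> froot F' i" using r2 ne by simp
  show "succ F' i = m" using succ_eq[OF fnF' im] .
  show "succ F i = p" using succ_eq[OF fn ip] .
  have "sg_weight W F = W$i$p * sg_weight W H"
    using wt_insert[of i p H W] ip unfolding H_def by (simp add: insert_absorb)
  moreover have "sg_weight W F' = W$i$m * sg_weight W H"
    using wt_insert[of i m H W] imF unfolding H_def F'_def by simp
  ultimately show "sg_weight W F' * W$i$p = sg_weight W F * W$i$m" by simp
  show "insert (i,p) (F' - {(i,m)}) = F" unfolding F'_def using ip imF mp by auto
  show "W$i$p > 0" using ip sub unfolding arcs_def by auto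
qed

lemma B_fwd:
  fixes W :: "real^'n::finite^'n" and F :: "('n \<times> 'n) set"
  assumes fo: "forest W F" and iF: "i \<notin> Domain F" and wm: "W$i$m > 0" and ne: "froot F m \<noteq> froot F i"
  defines "G \<equiv> insert (i,m) F"
  shows "forest W G" "card G = Suc (card F)" "i \<in> Domain G" "froot G i = froot F m"
    "succ G i = m" "G - {(i,m)} = F" "sg_weight W G = W$i$m * sg_weight W F" "froot F i = i"
proof -
  have fn: "func F" and ac: "acyclic F" and sub: "F \<subseteq> arcs W" using fo unfolding forest_def by auto
  have imF: "(i,m) \<notin> F" using iF by auto
  have mi: "(m,i) \<notin> F\<^sup>*" using root_rtrancl[OF fn ac] ne by auto
  have acG: "acyclic G" unfolding G_def using ac mi by simp
  have fnG: "func G" using fn iF unfolding G_def func_def by auto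
  have subG: "G \<subseteq> arcs W" using sub wm unfolding G_def arcs_def by auto
  show "forest W G" using acG fnG subG unfolding forest_def by auto
  show "card G = Suc (card F)" unfolding G_def using imF by simp
  show im: "i \<in> Domain G" unfolding G_def by auto
  have r1: "froot G m = froot F m"
  proof (rule root_change[OF fn ac fnG acG])
    fix y z assume "(m,y)\<in>F\<^sup>*"
    then have "y \<noteq> i" using mi by auto
    then show "(y,z)\<in>F \<longleftrightarrow> (y,z)\<in>G" unfolding G_def by auto
  qed
  show "froot G i = froot F m" using root_step[OF fnG acG, of i m] r1 unfolding G_def by simp
  show "succ G i = m" using succ_eq[OF fnG] unfolding G_def by simp
  show "G - {(i,m)} = F" unfolding G_def using imF by auto
  show "sg_weight W G = W$i$m * sg_weight W F" unfolding G_def using wt_insert[OF imF] .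
  show "froot F i = i" using root_sink[OF fn ac iF] .
qed

lemma B_bwd:
  fixes W :: "real^'n::finite^'n" and G :: "('n \<times> 'n) set"
  assumes fo: "forest W G" and iss: "(i,s)\<in>G"
  defines "H \<equiv> G - {(i,s)}"
  shows "forest W H" "Suc (card H) = card G" "i \<notin> Domain H" "W$i$s > 0"
    "froot H s \<noteq> froot H i" "insert (i,s) H = G" "succ G i = s"
proof -
  have fn: "func G" and ac: "acyclic G" and sub: "G \<subseteq> arcs W" using fo unfolding forest_def by auto
  have acH: "acyclic H" unfolding H_def by (rule acyclic_subset[OF ac]) auto
  have fnH: "func H" using fn unfolding H_def func_def by auto
  show "forest W H" using acH fnH sub unfolding forest_def H_def by auto
  show "Suc (card H) = card G" unfolding H_def using iss
    by (metis card_Suc_Diff1 finite)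
  show iH: "i \<notin> Domain H" using fn iss unfolding H_def func_def by auto
  show "W$i$s > 0" using iss sub unfolding arcs_def by auto
  have ri: "froot H i = i" using root_sink[OF fnH acH iH] .
  show "froot H s \<noteq> froot H i"
  proof
    assume "froot H s = froot H i"
    then have "(s,i)\<in>H\<^sup>*" using root_prop[OF fnH acH, of s] ri by simp
    then have "(s,i)\<in>G\<^sup>*" using rtrancl_mono[of H G] unfolding H_def by auto
    then have "(i,i)\<in>G\<^sup>+" using iss by (meson rtrancl_into_trancl2)
    then show False using ac unfolding acyclic_def by blast
  qed
  show "insert (i,s) H = G" unfolding H_def using iss by auto
  show "succ G i = s" using succ_eq[OF fn iss] .
qed



lemma core:
  fixes W :: "real^'n::finite^'n"
  assumes nonneg: "\<And>i j. W$i$j \<ge> 0"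
  shows "(\<Sum>m\<in>UNIV. W$i$m * (Qmat W k $i$j - Qmat W k $m$j))
       = of_bool (i=j) * sigma W (Suc k) - Qmat W (Suc k) $i$j"
proof -
  define D where "D = (\<lambda>(F,m). W$i$m * sg_weight W F * (of_bool (froot F i = j) - of_bool (froot F m = j)))"
  define P where "P = {(F,m). F \<in> FS W k \<and> W$i$m > 0 \<and> froot F m \<noteq> froot F i}"
  define B where "B = {(F,m). F \<in> FS W k \<and> W$i$m > 0 \<and> froot F m \<noteq> froot F i \<and> i \<notin> Domain F}"
  define C where "C = {(F,m). F \<in> FS W k \<and> W$i$m > 0 \<and> froot F m \<noteq> froot F i \<and> i \<in> Domain F}"
  define T where "T = {G \<in> FS W (Suc k). i \<in> Domain G}"
  define E where "E = (\<lambda>G. sg_weight W G * (of_bool (i=j) - of_bool (froot G i = j)))"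
  define \<phi> where "\<phi> = (\<lambda>(F,m). (insert (i,m) (F - {(i, succ F i)}), succ F i))"
  define \<psi> where "\<psi> = (\<lambda>(F::('n\<times>'n) set,m). insert (i,m) F)"
  define \<kappa> where "\<kappa> = (\<lambda>G. (G - {(i, succ G i)}, succ G i))"
  have finA: "finite (FS W k \<times> (UNIV::'n set))" using finite_FS by auto
  have s1: "(\<Sum>m\<in>UNIV. W$i$m * (Qmat W k $i$j - Qmat W k $m$j)) = sum D (FS W k \<times> UNIV)"
  proof -
    have "(\<Sum>m\<in>UNIV. W$i$m * (Qmat W k $i$j - Qmat W k $m$j))
        = (\<Sum>m\<in>UNIV. \<Sum>F\<in>FS W k. D (F,m))"
    proof (rule sum.cong[OF refl])
      fix m
      have "W$i$m * (Qmat W k $i$j - Qmat W k $m$j)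
          = (\<Sum>F\<in>FS W k. W$i$m * (sg_weight W F * of_bool (froot F i = j)) - W$i$m * (sg_weight W F * of_bool (froot F m = j)))"
        unfolding Qmat_entry by (simp only: right_diff_distrib sum_distrib_left sum_subtractf)
      also have "\<dots> = (\<Sum>F\<in>FS W k. D (F,m))"
        unfolding D_def by (rule sum.cong[OF refl]) (simp add: algebra_simps)
      finally show "W$i$m * (Qmat W k $i$j - Qmat W k $m$j) = (\<Sum>F\<in>FS W k. D (F,m))" .
    qed
    also have "\<dots> = (\<Sum>F\<in>FS W k. \<Sum>m\<in>UNIV. D (F,m))" by (rule sum.swap)
    also have "\<dots> = sum D (FS W k \<times> UNIV)" by (simp add: sum.cartesian_product)
    finally show ?thesis .
  qed
  have s2: "sum D (FS W k \<times> UNIV) = sum D P"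
  proof (rule sum.mono_neutral_right[OF finA])
    show "P \<subseteq> FS W k \<times> UNIV" unfolding P_def by auto
    show "\<forall>x\<in>FS W k \<times> UNIV - P. D x = 0"
    proof
      fix x assume "x \<in> FS W k \<times> UNIV - P"
      then obtain F m where x: "x = (F,m)" "F \<in> FS W k" "\<not> (W$i$m > 0 \<and> froot F m \<noteq> froot F i)"
        unfolding P_def by auto
      then have "W$i$m = 0 \<or> froot F m = froot F i" using nonneg[of i m] by auto
      then show "D x = 0" unfolding x D_def by auto
    qed
  qed
  have PBC: "P = B \<union> C" "B \<inter> C = {}" unfolding P_def B_def C_def by auto
  have finP: "finite P" by (rule finite_subset[OF _ finA]) (auto simp: P_def)
  have s3: "sum D P = sum D B + sum D C"
    using finP unfolding PBC(1) by (intro sum.union_disjoint) (auto simp: PBC)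
  have Cprop: "\<phi> (\<phi> a) = a \<and> \<phi> a \<in> C \<and> D (\<phi> a) = - D a" if "a \<in> C" for a
  proof -
    obtain F m where a: "a = (F,m)" "F \<in> FS W k" "W$i$m > 0" "froot F m \<noteq> froot F i" "i \<in> Domain F"
      using \<open>a \<in> C\<close> unfolding C_def by auto
    obtain p where ip: "(i,p)\<in>F" using a(5) by auto
    have fo: "forest W F" "card F = k" using a(2) unfolding FS_def by auto
    note ci = C_invol[OF fo(1) ip a(3) a(4)]
    define F' where "F' = insert (i,m) (F - {(i,p)})"
    have pa: "\<phi> a = (F', p)" unfolding \<phi>_def a(1) F'_def using ci(8) by simp
    have e: "\<phi> (F',p) = (insert (i,p) (F' - {(i, succ F' i)}), succ F' i)" unfolding \<phi>_def by simp
    have c7: "succ F' i = m" using ci(7) unfolding F'_def .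
    have c10: "insert (i,p) (F' - {(i,m)}) = F" using ci(10) unfolding F'_def .
    have "\<phi> (\<phi> a) = (F,m)" by (simp only: pa e c7 c10)
    then have "\<phi> (\<phi> a) = a" using a(1) by simp
    moreover have "\<phi> a \<in> C" unfolding pa C_def FS_def F'_def using ci fo(2) by auto
    moreover have "D (\<phi> a) = - D a"
    proof -
      have "D (F',p) = - D (F,m)" unfolding D_def F'_def
        using ci(5,6,9) by (simp add: algebra_simps)
      then show ?thesis using pa a(1) by simp
    qed
    ultimately show ?thesis by blast
  qed
  have s4: "sum D C = 0"
  proof -
    have "sum D C = sum (\<lambda>x. - D x) C"
      by (rule sum.reindex_bij_witness[where i=\<phi> and j=\<phi>]) (use Cprop in auto)
    then show ?thesis by (simp add: sum_negf)
  qed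
  have s5: "sum D B = sum E T"
  proof (rule sum.reindex_bij_witness[where i=\<kappa> and j=\<psi>])
    fix a assume "a \<in> B"
    then obtain F m where a: "a = (F,m)" "F \<in> FS W k" "W$i$m > 0" "froot F m \<noteq> froot F i" "i \<notin> Domain F"
      unfolding B_def by auto
    have fo: "forest W F" "card F = k" using a(2) unfolding FS_def by auto
    note bf = B_fwd[OF fo(1) a(5) a(3) a(4)]
    show "\<kappa> (\<psi> a) = a" unfolding a(1) \<psi>_def \<kappa>_def using bf(5,6) by simp
    show "\<psi> a \<in> T" unfolding a(1) \<psi>_def T_def FS_def using bf(1,2,3) fo(2) by auto
    show "E (\<psi> a) = D a" unfolding a(1) \<psi>_def E_def D_def using bf(4,7,8) by (simp add: algebra_simps)
  next
    fix b assume "b \<in> T"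
    then have fo: "forest W b" "card b = Suc k" "i \<in> Domain b" unfolding T_def FS_def by auto
    then obtain s where iss: "(i,s)\<in>b" by auto
    note bb = B_bwd[OF fo(1) iss]
    show "\<psi> (\<kappa> b) = b" unfolding \<psi>_def \<kappa>_def using bb(6,7) by simp
    show "\<kappa> b \<in> B" unfolding \<kappa>_def B_def FS_def using bb fo(2) by auto
  qed
  have s6: "sum E T = sum E (FS W (Suc k))"
  proof (rule sum.mono_neutral_left[OF finite_FS])
    show "T \<subseteq> FS W (Suc k)" unfolding T_def by auto
    show "\<forall>x\<in>FS W (Suc k) - T. E x = 0"
    proof
      fix G assume "G \<in> FS W (Suc k) - T"
      then have "forest W G" "i \<notin> Domain G" unfolding T_def FS_def by auto
      then have "froot G i = i" using root_sink forest_func forest_acyc by blast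
      then show "E G = 0" unfolding E_def by auto
    qed
  qed
  have s7: "sum E (FS W (Suc k)) = of_bool (i=j) * sigma W (Suc k) - Qmat W (Suc k) $i$j"
    unfolding E_def sigma_def Qmat_entry
    by (simp add: sum_subtractf sum_distrib_left sum_distrib_right algebra_simps)
  show ?thesis using s1 s2 s3 s4 s5 s6 s7 by simp
qed



lemma mm_diff_left: "(A::real^'n::finite^'m) ** (B - C) = A ** B - A ** C"
  by (simp add: matrix_matrix_mult_def vec_eq_iff sum_subtractf right_diff_distrib)
lemma mm_diff_right: "((B::real^'n::finite^'m) - C) ** (A::real^'k^'n) = B ** A - C ** A"
  by (simp add: matrix_matrix_mult_def vec_eq_iff sum_subtractf left_diff_distrib)
lemma mm_scale_left: "(A::real^'n::finite^'m) ** (c *\<^sub>R B) = c *\<^sub>R (A ** B)"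
  by (simp add: matrix_matrix_mult_def vec_eq_iff sum_distrib_left algebra_simps)
lemma mm_scale_right: "(c *\<^sub>R (B::real^'n::finite^'m)) ** (A::real^'k^'n) = c *\<^sub>R (B ** A)"
  by (simp add: matrix_matrix_mult_def vec_eq_iff sum_distrib_left algebra_simps)
lemma mm_sum_left: "(A::real^'n::finite^'m) ** (\<Sum>x\<in>S. f x) = (\<Sum>x\<in>S. A ** f x)"
  by (simp add: matrix_matrix_mult_def vec_eq_iff sum_component sum_distrib_left sum.swap[of _ S])
lemma mm_sum_right: "(\<Sum>x\<in>S. f x) ** (A::real^'k^'n::finite) = (\<Sum>x\<in>S. f x ** A)"
  by (simp add: matrix_matrix_mult_def vec_eq_iff sum_component sum_distrib_right sum.swap[of _ S])

lemma lap_sum: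
  fixes W :: "real^'n::finite^'n" and X :: "real^'n^'n"
  assumes diag: "\<And>i. W$i$i = 0"
  shows "(\<Sum>m\<in>UNIV. laplacian W $i$m * X$m$j) = (\<Sum>m\<in>UNIV. W$i$m * (X$i$j - X$m$j))"
proof -
  have "(\<Sum>m\<in>UNIV. laplacian W $i$m * X$m$j)
      = laplacian W $i$i * X$i$j + (\<Sum>m\<in>UNIV-{i}. laplacian W $i$m * X$m$j)"
    by (rule sum.remove) auto
  also have "\<dots> = (\<Sum>m\<in>UNIV-{i}. W$i$m) * X$i$j + (\<Sum>m\<in>UNIV-{i}. - W$i$m * X$m$j)"
    unfolding laplacian_def by simp
  also have "\<dots> = (\<Sum>m\<in>UNIV-{i}. W$i$m * (X$i$j - X$m$j))"
    by (simp add: sum_distrib_right sum_subtractf right_diff_distrib sum_negf)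
  also have "\<dots> = W$i$i * (X$i$j - X$i$j) + (\<Sum>m\<in>UNIV-{i}. W$i$m * (X$i$j - X$m$j))"
    by simp
  also have "\<dots> = (\<Sum>m\<in>UNIV. W$i$m * (X$i$j - X$m$j))"
    by (rule sum.remove[symmetric]) auto
  finally show ?thesis .
qed

lemma L_Q:
  fixes W :: "real^'n::finite^'n"
  assumes diag: "\<And>i. W$i$i = 0" and nonneg: "\<And>i j. W$i$j \<ge> 0"
  shows "laplacian W ** Qmat W k = sigma W (Suc k) *\<^sub>R mat 1 - Qmat W (Suc k)"
proof -
  have "(laplacian W ** Qmat W k) $i$j = (sigma W (Suc k) *\<^sub>R mat 1 - Qmat W (Suc k)) $i$j" for i j
  proof -
    have "(laplacian W ** Qmat W k) $i$j = (\<Sum>m\<in>UNIV. laplacian W $i$m * Qmat W k $m$j)"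
      by (simp add: matrix_matrix_mult_def)
    also have "\<dots> = of_bool (i=j) * sigma W (Suc k) - Qmat W (Suc k) $i$j"
      unfolding lap_sum[OF diag] by (rule core[OF nonneg])
    finally show ?thesis by (simp add: mat_def)
  qed
  then show ?thesis by (simp add: vec_eq_iff)
qed

definition commL :: "real^'n^'n \<Rightarrow> real^'n^'n \<Rightarrow> bool" where
  "commL L X \<longleftrightarrow> (\<forall>M. M ** L = L ** M \<longrightarrow> M ** X = X ** M)"

lemma commL_step:
  fixes L :: "real^'n::finite^'n"
  assumes "commL L X"
  shows "commL L (c *\<^sub>R mat 1 - L ** X)"
  unfolding commL_def
proof (intro allI impI)
  fix M assume hML: "M ** L = L ** M"
  have MX: "M ** X = X ** M" using assms hML unfolding commL_def by blast
  have "M ** (c *\<^sub>R mat 1 - L ** X) = c *\<^sub>R M - (M ** L) ** X"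
    by (simp add: mm_diff_left mm_scale_left matrix_mul_assoc)
  also have "\<dots> = c *\<^sub>R M - L ** (M ** X)" by (simp add: hML matrix_mul_assoc)
  also have "\<dots> = c *\<^sub>R M - (L ** X) ** M" by (simp add: MX matrix_mul_assoc)
  also have "\<dots> = (c *\<^sub>R mat 1 - L ** X) ** M"
    by (simp add: mm_diff_right mm_scale_right)
  finally show "M ** (c *\<^sub>R mat 1 - L ** X) = (c *\<^sub>R mat 1 - L ** X) ** M" .
qed

lemma Q0:
  fixes W :: "real^'n::finite^'n"
  shows "Qmat W 0 = mat 1"
proof -
  have ac0: "acyclic ({}::('n\<times>'n) set)" by (simp add: acyclic_def)
  have fo: "forest W {}" unfolding forest_def func_def using ac0 by auto
  have "FS W 0 = {{}}" unfolding FS_def using fo by auto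
  moreover have "froot {} i = i" for i :: 'n
    using root_sink[of "{}" i] ac0 unfolding func_def by auto
  ultimately show ?thesis
    by (simp add: vec_eq_iff Qmat_entry mat_def sg_weight_def)
qed

lemma Q_comm:
  fixes W :: "real^'n::finite^'n"
  assumes diag: "\<And>i. W$i$i = 0" and nonneg: "\<And>i j. W$i$j \<ge> 0"
  shows "commL (laplacian W) (Qmat W k)"
proof (induction k)
  case 0 then show ?case by (simp add: Q0 commL_def)
next
  case (Suc k)
  have "Qmat W (Suc k) = sigma W (Suc k) *\<^sub>R mat 1 - laplacian W ** Qmat W k"
    using L_Q[OF diag nonneg, of k] by simp
  then show ?case using commL_step[OF Suc.IH] by simp
qed

lemma Q_big:
  fixes W :: "real^'n::finite^'n"
  assumes "k > CARD('n \<times> 'n)"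
  shows "Qmat W k = 0"
proof -
  have "FS W k = {}"
  proof -
    have "card F \<le> CARD('n \<times> 'n)" for F :: "('n \<times> 'n) set"
      by (rule card_mono) auto
    then show ?thesis unfolding FS_def using assms by (auto simp: not_less[symmetric])
  qed
  then show ?thesis by (simp add: vec_eq_iff Qmat_entry)
qed

lemma Qtau_sum:
  fixes W :: "real^'n::finite^'n"
  shows "Qtau W \<tau> = (\<Sum>k<Suc CARD('n \<times> 'n). (\<tau> ^ k) *\<^sub>R Qmat W k)"
  unfolding Qtau_def by (rule suminf_finite) (auto simp: Q_big)

theorem corollary3:
  fixes W :: "real^'n^'n"
  assumes "CARD('n) > 1"
    and "\<And>i. W $ i $ i = 0"
    and "\<And>i j. W $ i $ j \<ge> 0"
  shows "(\<forall>k. \<forall>M :: real^'n^'n. M ** laplacian W = laplacian W ** M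
              \<longrightarrow> M ** Qmat W k = Qmat W k ** M)
       \<and> (\<forall>k. Qmat W k ** laplacian W = laplacian W ** Qmat W k)
       \<and> (\<forall>k \<tau>. Qmat W k ** Qtau W \<tau> = Qtau W \<tau> ** Qmat W k)
       \<and> (\<forall>k m. Qmat W k ** Qmat W m = Qmat W m ** Qmat W k)"
proof -
  have P1: "\<forall>k. \<forall>M :: real^'n^'n. M ** laplacian W = laplacian W ** M
              \<longrightarrow> M ** Qmat W k = Qmat W k ** M"
    using Q_comm[OF assms(2,3)] unfolding commL_def by blast
  have P2: "\<forall>k. Qmat W k ** laplacian W = laplacian W ** Qmat W k"
    using P1 by auto
  have P4: "\<forall>k m. Qmat W k ** Qmat W m = Qmat W m ** Qmat W k"
    using P1 P2 by metis
  have P3: "\<forall>k \<tau>. Qmat W k ** Qtau W \<tau> = Qtau W \<tau> ** Qmat W k"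
  proof (intro allI)
    fix k \<tau>
    have "Qmat W k ** Qtau W \<tau> = (\<Sum>m<Suc CARD('n \<times> 'n). \<tau> ^ m *\<^sub>R (Qmat W k ** Qmat W m))"
      unfolding Qtau_sum by (simp only: mm_sum_left mm_scale_left)
    also have "\<dots> = (\<Sum>m<Suc CARD('n \<times> 'n). \<tau> ^ m *\<^sub>R (Qmat W m ** Qmat W k))"
      using P4 by simp
    also have "\<dots> = Qtau W \<tau> ** Qmat W k"
      unfolding Qtau_sum by (simp only: mm_sum_right mm_scale_right)
    finally show "Qmat W k ** Qtau W \<tau> = Qtau W \<tau> ** Qmat W k" .
  qed
  show ?thesis using P1 P2 P3 P4 by blast
qed

end
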